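(* Let $0<\alpha\le1$, $\lambda>0$, and let $\{M_{\alpha,\lambda}(t)\}_{t\ge0}$ be a Lévy process whose marginals have Laplace transform $\mathbb{E}\, e^{-uM_{\alpha,\lambda}(t)}=\left(\frac{\lambda}{\lambda+u^{\alpha}}\right)^{t}$ for $u\ge 0$. Then for each $t>0$, $M_{\alpha,\lambda}(t)$ has a density on $(0,\infty)$ given by $$f_{M_{\alpha,\lambda}(t)}(x)=\sum_{k=0}^{\infty}(-1)^k\frac{\lambda^{t+k}\,\Gamma(t+k)}{\Gamma(t)\,\Gamma(k+1)}\,\frac{x^{\alpha(t+k)-1}}{\Gamma(\alpha(t+k))},\qquad x>0.$$ *)

theory Defs
  imports "HOL-Probability.Probability"
begin

definition levy_process :: "'a measure \<Rightarrow> (real \<Rightarrow> 'a \<Rightarrow> real) \<Rightarrow> bool" where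
  "levy_process M X \<longleftrightarrow>
     prob_space M \<and>
     (\<forall>t\<ge>0. X t \<in> borel_measurable M) \<and>
     (AE \<omega> in M. X 0 \<omega> = 0) \<and>
     (\<forall>ts::real list. sorted ts \<and> ts \<noteq> [] \<and> hd ts \<ge> 0 \<longrightarrow>
        prob_space.indep_vars M (\<lambda>_. borel)
          (\<lambda>i \<omega>. X (ts ! Suc i) \<omega> - X (ts ! i) \<omega>) {..<length ts - 1}) \<and>
     (\<forall>s\<ge>0. \<forall>t\<ge>0. distr M borel (\<lambda>\<omega>. X (s + t) \<omega> - X s \<omega>) = distr M borel (X t)) \<and>
     (\<forall>t\<ge>0. \<forall>e>0. ((\<lambda>s. measure M {\<omega> \<in> space M. \<bar>X s \<omega> - X t \<omega>\<bar> > e})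
                    \<longlongrightarrow> 0) (at t within {0..}))"

end

theory Submission
  imports Defs
begin


lemma gamma_nn:
  fixes b u :: real assumes b: "b > 0" and u: "u > 0"
  shows "(\<integral>\<^sup>+x. ennreal (indicator {0<..} x * x powr (b - 1) * exp (- u * x)) \<partial>lborel)
         = ennreal (Gamma b * u powr (- b))"
proof -
  have "(\<integral>\<^sup>+x. ennreal (indicator {0<..} x * x powr (b - 1) * exp (- u * x)) \<partial>lborel)
     = ennreal \<bar>1/u\<bar> * (\<integral>\<^sup>+x. ennreal (indicator {0<..} (0 + (1/u) * x) * (0 + (1/u) * x) powr (b - 1) * exp (- u * (0 + (1/u) * x))) \<partial>lborel)"
    by (rule nn_integral_real_affine) (use u in auto)
  also have "(\<lambda>x. ennreal (indicator {0<..} (0 + (1/u) * x) * (0 + (1/u) * x) powr (b - 1) * exp (- u * (0 + (1/u) * x))))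
     = (\<lambda>x. ennreal (u powr (1 - b)) * ennreal (indicator {0..} x * x powr (b - 1) / exp x))"
  proof
    fix x :: real
    show "ennreal (indicator {0<..} (0 + (1/u) * x) * (0 + (1/u) * x) powr (b - 1) * exp (- u * (0 + (1/u) * x)))
        = ennreal (u powr (1 - b)) * ennreal (indicator {0..} x * x powr (b - 1) / exp x)"
    proof (cases "x > 0")
      case True
      have "(x/u) powr (b-1) = u powr (1-b) * x powr (b-1)"
        using True u by (simp add: powr_divide powr_diff divide_simps powr_minus)
      then show ?thesis using True u
        by (simp add: ennreal_mult'[symmetric] exp_minus field_simps)
    next
      case False
      then show ?thesis using u by (auto simp: indicator_def zero_less_mult_iff zero_less_divide_iff)
    qed
  qed
  also have "ennreal \<bar>1/u\<bar> * (\<integral>\<^sup>+x. ennreal (u powr (1 - b)) * ennreal (indicator {0..} x * x powr (b - 1) / exp x) \<partial>lborel)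
     = ennreal \<bar>1/u\<bar> * (ennreal (u powr (1 - b)) * ennreal (Gamma b))"
    by (subst nn_integral_cmult) (auto simp: Gamma_conv_nn_integral_real[OF b])
  also have "\<dots> = ennreal (Gamma b * u powr (- b))"
    using u b Gamma_real_pos[OF b]
    by (simp add: ennreal_mult'[symmetric] powr_diff powr_minus field_simps)
  finally show ?thesis .
qed



definition cf :: "real \<Rightarrow> real \<Rightarrow> nat \<Rightarrow> real" where
  "cf lam t k = (-1) ^ k * (lam powr (t + real k) * Gamma (t + real k)) / (Gamma t * Gamma (real k + 1))"

lemma cf_eq:
  fixes t lam :: real assumes t: "t > 0" shows "cf lam t k = ((- t) gchoose k) * lam powr (t + real k)"
proof -
  have "((t + real k - 1) gchoose k) = Gamma (t + real k - 1 + 1) / (fact k * Gamma (t + real k - 1 - real k + 1))"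
    by (rule gbinomial_Gamma) (use t in \<open>auto elim!: nonpos_Ints_cases\<close>)
  also have "\<dots> = Gamma (t + real k) / (fact k * Gamma t)" by simp
  finally have 1: "((t + real k - 1) gchoose k) = Gamma (t + real k) / (fact k * Gamma t)" .
  have 2: "Gamma (real k + 1) = fact k" using Gamma_fact[of k, where 'a=real] by (simp add: add.commute)
  show ?thesis unfolding cf_def gbinomial_minus 1 2 by (simp add: field_simps)
qed

lemma binom_series:
  fixes t w :: real
  assumes t: "t > 0" and w: "0 \<le> w" "w < 1"
  shows "(\<lambda>k. ((- t) gchoose k) * w ^ k) sums (1 + w) powr (- t)"
    and "summable (\<lambda>k. \<bar>(- t) gchoose k\<bar> * w ^ k)"
proof -
  show "(\<lambda>k. ((- t) gchoose k) * w ^ k) sums (1 + w) powr (- t)"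
    using gen_binomial_real[of w "-t"] w by simp
  have "(\<lambda>k. ((- t) gchoose k) * ((1 + w)/2) ^ k) sums (1 + (1+w)/2) powr (- t)"
    using gen_binomial_real[of "(1+w)/2" "-t"] w by simp
  hence "summable (\<lambda>k. norm (((- t) gchoose k) * w ^ k))"
    by (intro powser_insidea[of _ "(1+w)/2"]) (use w in \<open>auto simp: sums_iff\<close>)
  thus "summable (\<lambda>k. \<bar>(- t) gchoose k\<bar> * w ^ k)" using w by (simp add: abs_mult)
qed



definition gd :: "real \<Rightarrow> real \<Rightarrow> real \<Rightarrow> real \<Rightarrow> real" where
  "gd \<alpha> lam t x = (if x > 0 then (\<Sum>k. cf lam t k * x powr (\<alpha> * (t + real k) - 1) / Gamma (\<alpha> * (t + real k))) else 0)"

lemma gd_measurable[measurable]: "gd \<alpha> lam t \<in> borel_measurable borel"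
  unfolding gd_def[abs_def] by measurable

lemma laplace_gd:
  fixes \<alpha> lam t u :: real
  assumes a: "\<alpha> > 0" and l: "lam > 0" and t: "t > 0" and u: "u > 0" and ul: "lam < u powr \<alpha>"
  shows "integrable lborel (\<lambda>x. exp (- u * x) * gd \<alpha> lam t x)"
    and "(\<integral>x. exp (- u * x) * gd \<alpha> lam t x \<partial>lborel) = (lam / (lam + u powr \<alpha>)) powr t"
proof -
  define \<beta> where "\<beta> k = \<alpha> * (t + real k)" for k
  define E where "E k x = indicator {0<..} x * x powr (\<beta> k - 1) * exp (- u * x)" for k x
  define f where "f k x = cf lam t k / Gamma (\<beta> k) * E k x" for k x
  define v where "v = u powr \<alpha>"
  define w where "w = lam / v"
  have v: "v > 0" using u by (simp add: v_def)
  have w: "0 \<le> w" "w < 1" using l ul v by (auto simp: w_def v_def)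
  have bpos: "\<beta> k > 0" for k using a t by (simp add: \<beta>_def)
  have Gpos: "Gamma (\<beta> k) > 0" for k using bpos Gamma_real_pos by blast
  have E_meas[measurable]: "E k \<in> borel_measurable borel" for k unfolding E_def[abs_def] by measurable
  have E_nonneg: "E k x \<ge> 0" for k x by (simp add: E_def)
  have E_nn: "(\<integral>\<^sup>+x. ennreal (E k x) \<partial>lborel) = ennreal (Gamma (\<beta> k) * u powr (- \<beta> k))" for k
    unfolding E_def by (rule gamma_nn[OF bpos u])
  have E_int: "integrable lborel (E k)" and E_integral: "integral\<^sup>L lborel (E k) = Gamma (\<beta> k) * u powr (- \<beta> k)" for k
    using nn_integral_eq_integrable[of "E k" lborel "Gamma (\<beta> k) * u powr (- \<beta> k)"] E_nn[of k] E_nonneg Gpos[of k] u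
    by auto
  have key: "cf lam t k * u powr (- \<beta> k) = lam powr t * v powr (- t) * (((- t) gchoose k) * w ^ k)" for k
  proof -
    have 1: "lam powr (t + real k) = lam powr t * lam ^ k" using l by (simp add: powr_add powr_realpow)
    have 2: "u powr (- \<beta> k) = v powr (- t) / v ^ k"
    proof -
      have "u powr (- \<beta> k) = v powr (- (t + real k))" unfolding v_def \<beta>_def powr_powr by (simp add: algebra_simps)
      also have "\<dots> = v powr (- t) * v powr (- real k)" by (simp add: powr_add[symmetric])
      also have "\<dots> = v powr (- t) / v ^ k" using v by (simp add: powr_minus powr_realpow divide_inverse)
      finally show ?thesis .
    qed
    show ?thesis unfolding cf_eq[OF t] 1 2 w_def using v by (simp add: field_simps power_divide)
  qed
  have f_int: "integrable lborel (f k)" for k unfolding f_def[abs_def] using E_int by simp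
  have f_integral: "integral\<^sup>L lborel (f k) = lam powr t * v powr (- t) * (((- t) gchoose k) * w ^ k)" for k
    unfolding f_def[abs_def] using E_integral[of k] key[of k] Gpos[of k] by simp
  have nf: "norm (f k x) = \<bar>cf lam t k\<bar> / Gamma (\<beta> k) * E k x" for k x
    using Gpos[of k] E_nonneg[of k x] by (simp add: f_def abs_mult)
  have nf_integral: "(\<integral>x. norm (f k x) \<partial>lborel) = lam powr t * v powr (- t) * (\<bar>(- t) gchoose k\<bar> * w ^ k)" for k
  proof -
    have "(\<integral>x. norm (f k x) \<partial>lborel) = \<bar>cf lam t k\<bar> * u powr (- \<beta> k)"
      unfolding nf using E_integral[of k] Gpos[of k] by simp
    also have "\<dots> = \<bar>cf lam t k * u powr (- \<beta> k)\<bar>" using u by (simp add: abs_mult)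
    also have "\<dots> = lam powr t * v powr (- t) * (\<bar>(- t) gchoose k\<bar> * w ^ k)"
      unfolding key using w v l by (simp add: abs_mult)
    finally show ?thesis .
  qed
  have sumn: "summable (\<lambda>k. (\<integral>x. norm (f k x) \<partial>lborel))"
    unfolding nf_integral by (intro summable_mult binom_series(2)[OF t w])
  have ae: "AE x in lborel. summable (\<lambda>k. norm (f k x))"
  proof -
    have f_meas[measurable]: "f k \<in> borel_measurable borel" for k unfolding f_def[abs_def] by measurable
    have "(\<integral>\<^sup>+x. (\<Sum>k. ennreal (norm (f k x))) \<partial>lborel) = (\<Sum>k. \<integral>\<^sup>+x. ennreal (norm (f k x)) \<partial>lborel)"
      by (rule nn_integral_suminf) simp
    also have "\<dots> = (\<Sum>k. ennreal (\<integral>x. norm (f k x) \<partial>lborel))"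
      using f_int by (subst nn_integral_eq_integral) auto
    also have "\<dots> = ennreal (\<Sum>k. (\<integral>x. norm (f k x) \<partial>lborel))"
      by (rule suminf_ennreal2[OF _ sumn]) simp
    finally have "(\<integral>\<^sup>+x. (\<Sum>k. ennreal (norm (f k x))) \<partial>lborel) \<noteq> \<infinity>" by simp
    moreover have m: "(\<lambda>x. \<Sum>k. ennreal (norm (f k x))) \<in> borel_measurable lborel" by measurable
    ultimately have "AE x in lborel. (\<Sum>k. ennreal (norm (f k x))) \<noteq> \<infinity>"
      using nn_integral_PInf_AE by blast
    then show ?thesis
      by eventually_elim (rule summable_suminf_not_top, simp_all)
  qed
  note S = integrable_suminf[OF f_int ae sumn] integral_suminf[OF f_int ae sumn]
  have eq: "AE x in lborel. exp (- u * x) * gd \<alpha> lam t x = (\<Sum>k. f k x)"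
    using ae
  proof eventually_elim
    case (elim x)
    show ?case
    proof (cases "x > 0")
      case True
      have fk: "f k x = exp (- u * x) * (cf lam t k * x powr (\<alpha> * (t + real k) - 1) / Gamma (\<alpha> * (t + real k)))" for k
        using True by (simp add: f_def E_def \<beta>_def)
      have "summable (\<lambda>k. f k x)" by (rule summable_norm_cancel[OF elim])
      hence "summable (\<lambda>k. exp (u * x) * f k x)" by (rule summable_mult)
      moreover have e1: "exp (u * x) * exp (- u * x) = 1" by (simp add: exp_add[symmetric])
      moreover have "exp (u * x) * f k x = cf lam t k * x powr (\<alpha> * (t + real k) - 1) / Gamma (\<alpha> * (t + real k))" for k
        unfolding fk mult.assoc[symmetric] e1 by simp
      ultimately have sm: "summable (\<lambda>k. cf lam t k * x powr (\<alpha> * (t + real k) - 1) / Gamma (\<alpha> * (t + real k)))"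
        by (simp only:)
      have "gd \<alpha> lam t x = (\<Sum>k. cf lam t k * x powr (\<alpha> * (t + real k) - 1) / Gamma (\<alpha> * (t + real k)))"
        using True by (simp add: gd_def)
      also have "exp (- u * x) * \<dots> = (\<Sum>k. f k x)"
        unfolding fk by (rule suminf_mult[OF sm, symmetric])
      finally show ?thesis .
    next
      case False
      thus ?thesis by (simp add: gd_def f_def E_def)
    qed
  qed
  have eq': "AE x in lborel. (\<Sum>k. f k x) = exp (- u * x) * gd \<alpha> lam t x"
    using eq by eventually_elim simp
  have f_meas[measurable]: "f k \<in> borel_measurable borel" for k unfolding f_def[abs_def] by measurable
  show "integrable lborel (\<lambda>x. exp (- u * x) * gd \<alpha> lam t x)"
    by (rule integrable_cong_AE_imp[OF S(1) _ eq']) measurable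
  have "(\<integral>x. exp (- u * x) * gd \<alpha> lam t x \<partial>lborel) = (\<integral>x. (\<Sum>k. f k x) \<partial>lborel)"
    by (rule integral_cong_AE[OF _ _ eq]) measurable
  also have "\<dots> = (\<Sum>k. integral\<^sup>L lborel (f k))" by (rule S(2))
  also have "\<dots> = (\<Sum>k. lam powr t * v powr (- t) * (((- t) gchoose k) * w ^ k))"
    unfolding f_integral ..
  also have "\<dots> = lam powr t * v powr (- t) * (1 + w) powr (- t)"
    using binom_series(1)[OF t w] by (simp add: sums_iff suminf_mult)
  also have "\<dots> = (lam / (lam + u powr \<alpha>)) powr t"
  proof -
    have 1: "1 + w = (lam + v) / v" using v by (simp add: w_def field_simps)
    have 2: "((lam + v) / v) powr (- t) = v powr t / (lam + v) powr t"
    proof -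
      have "((lam + v) / v) powr t = (lam + v) powr t / v powr t" using v l by (simp add: powr_divide)
      thus ?thesis unfolding powr_minus by simp
    qed
    have 3: "v powr (- t) * v powr t = 1" using v by (simp add: powr_add[symmetric])
    have 4: "lam powr t / (lam + v) powr t = (lam / (lam + v)) powr t" using v l by (simp add: powr_divide)
    have "lam powr t * v powr (- t) * (1 + w) powr (- t) = lam powr t / (lam + v) powr t * (v powr (- t) * v powr t)"
      unfolding 1 2 by simp
    also have "\<dots> = (lam / (lam + v)) powr t" unfolding 3 4 by simp
    finally show ?thesis unfolding v_def .
  qed
  finally show "(\<integral>x. exp (- u * x) * gd \<alpha> lam t x \<partial>lborel) = (lam / (lam + u powr \<alpha>)) powr t" .
qed



lemma eps_zero:
  fixes d C :: real assumes C: "C \<ge> 0" and h: "\<And>e. e > 0 \<Longrightarrow> \<bar>d\<bar> \<le> e * C"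
  shows "d = 0"
proof (rule ccontr)
  assume "d \<noteq> 0"
  hence "\<bar>d\<bar> > 0" by simp
  hence "\<bar>d\<bar> \<le> \<bar>d\<bar> / (C + 1) * C" using h[of "\<bar>d\<bar> / (C + 1)"] C by simp
  also have "\<dots> < \<bar>d\<bar>" using \<open>\<bar>d\<bar> > 0\<close> C by (simp add: field_simps)
  finally show False by simp
qed

lemma U_cont:
  fixes Q :: "real measure" and G :: "real \<Rightarrow> real" and h :: "real \<Rightarrow> real"
  assumes fin: "finite_measure Q" and sQ: "sets Q = sets borel"
    and Gi: "integrable lborel G"
    and mom: "\<And>n::nat. (\<integral>x. exp (- max x 0) ^ n \<partial>Q) = (\<integral>x. exp (- max x 0) ^ n * G x \<partial>lborel)"
    and hc: "continuous_on {0..1} h"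
  shows "(\<integral>x. h (exp (- max x 0)) \<partial>Q) = (\<integral>x. h (exp (- max x 0)) * G x \<partial>lborel)"
proof -
  interpret finite_measure Q by (rule fin)
  define \<phi> where "\<phi> x = exp (- max x 0)" for x :: real
  have phi01: "\<phi> x \<in> {0..1}" for x by (auto simp: \<phi>_def)
  have phic: "continuous_on UNIV \<phi>" unfolding \<phi>_def by (intro continuous_intros)
  have spQ: "space Q = UNIV" using sets_eq_imp_space_eq[OF sQ] by simp
  have mQ: "f \<in> borel_measurable Q \<longleftrightarrow> f \<in> borel_measurable borel" for f :: "real \<Rightarrow> real"
    by (subst measurable_cong_sets[OF sQ refl]) (rule refl)
  have Gm[measurable]: "G \<in> borel_measurable borel" using Gi by auto
  have intQ: "integrable Q (\<lambda>x. k (\<phi> x))" and intL: "integrable lborel (\<lambda>x. k (\<phi> x) * G x)"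
    if kc: "continuous_on {0..1} k" for k
  proof -
    have kpc: "continuous_on UNIV (\<lambda>x. k (\<phi> x))"
      using continuous_on_compose2[OF kc phic] phi01 by blast
    hence km[measurable]: "(\<lambda>x. k (\<phi> x)) \<in> borel_measurable borel"
      by (rule borel_measurable_continuous_onI)
    have "bounded (k ` {0..1})" by (intro compact_imp_bounded compact_continuous_image kc) simp
    then obtain B where B: "\<And>y. y \<in> {0..1} \<Longrightarrow> \<bar>k y\<bar> \<le> B" unfolding bounded_iff by (metis imageI real_norm_def)
    hence B': "\<bar>k (\<phi> x)\<bar> \<le> B" for x using phi01 by blast
    show "integrable Q (\<lambda>x. k (\<phi> x))"
      by (rule integrable_const_bound[where B=B]) (use B' mQ in auto)
    have i1: "integrable lborel (\<lambda>x. B * G x)" using Gi by simp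
    have i2: "AE x in lborel. norm (k (\<phi> x) * G x) \<le> norm (B * G x)"
    proof (rule AE_I2)
      fix x have "\<bar>k (\<phi> x)\<bar> \<le> \<bar>B\<bar>" using B'[of x] by linarith
      thus "norm (k (\<phi> x) * G x) \<le> norm (B * G x)" by (simp add: abs_mult mult_right_mono)
    qed
    show "integrable lborel (\<lambda>x. k (\<phi> x) * G x)"
      by (rule Bochner_Integration.integrable_bound[OF i1 _ i2]) measurable
  qed
  have polyc: "continuous_on {0..1} (\<lambda>y. \<Sum>i\<le>m. a i * y ^ i)" for a :: "nat \<Rightarrow> real" and m
    by (intro continuous_intros)
  have poly: "(\<integral>x. (\<Sum>i\<le>m. a i * \<phi> x ^ i) \<partial>Q) = (\<integral>x. (\<Sum>i\<le>m. a i * \<phi> x ^ i) * G x \<partial>lborel)"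
    for a :: "nat \<Rightarrow> real" and m
  proof -
    have pc: "continuous_on {0..1} (\<lambda>y::real. y ^ i)" for i :: nat by (intro continuous_intros)
    have "(\<integral>x. (\<Sum>i\<le>m. a i * \<phi> x ^ i) \<partial>Q) = (\<Sum>i\<le>m. a i * (\<integral>x. \<phi> x ^ i \<partial>Q))"
      using intQ[OF pc] by (simp add: integral_sum)
    also have "\<dots> = (\<Sum>i\<le>m. a i * (\<integral>x. \<phi> x ^ i * G x \<partial>lborel))"
      using mom by (simp add: \<phi>_def)
    also have "\<dots> = (\<integral>x. (\<Sum>i\<le>m. a i * (\<phi> x ^ i * G x)) \<partial>lborel)"
      using intL[OF pc] by (simp add: integral_sum)
    also have "\<dots> = (\<integral>x. (\<Sum>i\<le>m. a i * \<phi> x ^ i) * G x \<partial>lborel)"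
      by (simp add: sum_distrib_right mult.assoc)
    finally show ?thesis .
  qed
  define C where "C = measure Q UNIV + (\<integral>x. \<bar>G x\<bar> \<partial>lborel)"
  have C: "C \<ge> 0" unfolding C_def by (simp add: add_nonneg_nonneg)
  have "(\<integral>x. h (\<phi> x) \<partial>Q) - (\<integral>x. h (\<phi> x) * G x \<partial>lborel) = 0"
  proof (rule eps_zero[OF C])
    fix e :: real assume e: "e > 0"
    obtain p where pp: "real_polynomial_function p" and pe: "\<And>y. y \<in> {0..1} \<Longrightarrow> \<bar>h y - p y\<bar> < e"
      using Stone_Weierstrass_real_polynomial_function[of "{0..1}" h e] hc e by auto
    obtain a m where pa: "p = (\<lambda>y. \<Sum>i\<le>m. a i * y ^ i)"
      using real_polynomial_function_imp_sum[OF pp] by (auto simp: mult.commute)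
    have dc: "continuous_on {0..1} (\<lambda>y. h y - p y)" unfolding pa by (intro continuous_intros hc)
    have pe': "\<bar>h (\<phi> x) - p (\<phi> x)\<bar> \<le> e" for x using pe[OF phi01[of x]] by simp
    have 1: "\<bar>(\<integral>x. h (\<phi> x) \<partial>Q) - (\<integral>x. p (\<phi> x) \<partial>Q)\<bar> \<le> e * measure Q UNIV"
    proof -
      have "\<bar>(\<integral>x. h (\<phi> x) \<partial>Q) - (\<integral>x. p (\<phi> x) \<partial>Q)\<bar> = \<bar>\<integral>x. h (\<phi> x) - p (\<phi> x) \<partial>Q\<bar>"
        using intQ[OF hc] intQ[OF polyc[of a m]] unfolding pa by simp
      also have "\<dots> \<le> (\<integral>x. \<bar>h (\<phi> x) - p (\<phi> x)\<bar> \<partial>Q)" by (rule integral_abs_bound)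
      also have "\<dots> \<le> (\<integral>x. e \<partial>Q)"
        by (rule integral_mono) (use pe' intQ[OF dc] in auto)
      also have "\<dots> = e * measure Q UNIV" using spQ by simp
      finally show ?thesis .
    qed
    have 2: "\<bar>(\<integral>x. h (\<phi> x) * G x \<partial>lborel) - (\<integral>x. p (\<phi> x) * G x \<partial>lborel)\<bar> \<le> e * (\<integral>x. \<bar>G x\<bar> \<partial>lborel)"
    proof -
      have "\<bar>(\<integral>x. h (\<phi> x) * G x \<partial>lborel) - (\<integral>x. p (\<phi> x) * G x \<partial>lborel)\<bar>
          = \<bar>\<integral>x. (h (\<phi> x) - p (\<phi> x)) * G x \<partial>lborel\<bar>"
        using intL[OF hc] intL[OF polyc[of a m]] unfolding pa by (simp add: left_diff_distrib)
      also have "\<dots> \<le> (\<integral>x. \<bar>(h (\<phi> x) - p (\<phi> x)) * G x\<bar> \<partial>lborel)" by (rule integral_abs_bound)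
      also have "\<dots> \<le> (\<integral>x. e * \<bar>G x\<bar> \<partial>lborel)"
      proof (rule integral_mono)
        show "integrable lborel (\<lambda>x. \<bar>(h (\<phi> x) - p (\<phi> x)) * G x\<bar>)" using intL[OF dc] by simp
        show "integrable lborel (\<lambda>x. e * \<bar>G x\<bar>)" using Gi by simp
        show "\<bar>(h (\<phi> x) - p (\<phi> x)) * G x\<bar> \<le> e * \<bar>G x\<bar>" for x
          using pe'[of x] by (simp add: abs_mult mult_right_mono)
      qed
      also have "\<dots> = e * (\<integral>x. \<bar>G x\<bar> \<partial>lborel)" by simp
      finally show ?thesis .
    qed
    have 3: "(\<integral>x. p (\<phi> x) \<partial>Q) = (\<integral>x. p (\<phi> x) * G x \<partial>lborel)" unfolding pa by (rule poly)
    show "\<bar>(\<integral>x. h (\<phi> x) \<partial>Q) - (\<integral>x. h (\<phi> x) * G x \<partial>lborel)\<bar> \<le> e * C"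
      using 1 2 3 unfolding C_def by (simp add: algebra_simps abs_le_iff) linarith?
  qed
  thus ?thesis by (simp add: \<phi>_def)
qed



lemma U_main:
  fixes Q :: "real measure" and G :: "real \<Rightarrow> real"
  assumes fin: "finite_measure Q" and sQ: "sets Q = sets borel"
    and Q0: "emeasure Q {..0} = 0"
    and Gi: "integrable lborel G" and G0: "\<And>x. x \<le> 0 \<Longrightarrow> G x = 0"
    and mom: "\<And>n::nat. (\<integral>x. exp (- max x 0) ^ n \<partial>Q) = (\<integral>x. exp (- max x 0) ^ n * G x \<partial>lborel)"
  shows "Q = density lborel (\<lambda>x. ennreal (G x))"
proof -
  interpret finite_measure Q by (rule fin)
  have spQ: "space Q = UNIV" using sets_eq_imp_space_eq[OF sQ] by simp
  have mQ: "f \<in> borel_measurable Q \<longleftrightarrow> f \<in> borel_measurable borel" for f :: "real \<Rightarrow> real"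
    by (subst measurable_cong_sets[OF sQ refl]) (rule refl)
  have Gm[measurable]: "G \<in> borel_measurable borel" using Gi by auto
  have intA: "integrable lborel (\<lambda>x. indicator A x * G x)" if "A \<in> sets borel" for A
    using integrable_mult_indicator[of A lborel G] that Gi by simp
  have tot: "measure Q UNIV = (\<integral>x. G x \<partial>lborel)"
    using mom[of 0] spQ by simp
  have Qle0: "measure Q {..a} = 0" if "a \<le> 0" for a
  proof -
    have "measure Q {..a} \<le> measure Q {..0}"
      by (rule finite_measure_mono) (use that sQ in auto)
    moreover have "measure Q {..0} = 0" using Q0 by (simp add: measure_def)
    ultimately show ?thesis by (simp add: measure_nonneg antisym)
  qed
  have int_pos: "measure Q {a<..} = (\<integral>x. indicator {a<..} x * G x \<partial>lborel)" if a: "a \<ge> 0" for a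
  proof -
    define s where "s m x = min 1 (max 0 (real m * (exp (- a) - exp (- max x 0))))" for m :: nat and x :: real
    have sm[measurable]: "s m \<in> borel_measurable borel" for m unfolding s_def[abs_def] by measurable
    have eq: "(\<integral>x. s m x \<partial>Q) = (\<integral>x. s m x * G x \<partial>lborel)" for m
    proof -
      have "continuous_on {0..1} (\<lambda>y. min 1 (max 0 (real m * (exp (- a) - y))))"
        by (intro continuous_intros)
      from U_cont[OF fin sQ Gi mom this] show ?thesis by (simp add: s_def)
    qed
    have lim: "(\<lambda>m. s m x) \<longlonglongrightarrow> indicator {a<..} x" for x
    proof (cases "x > a")
      case True
      define d where "d = exp (- a) - exp (- x)"
      have d: "d > 0" using True by (simp add: d_def)
      have mx: "max x 0 = x" using True a by simp
      have "eventually (\<lambda>m. s m x = 1) sequentially"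
        unfolding eventually_sequentially
      proof (intro exI allI impI)
        fix m assume "nat \<lceil>1 / d\<rceil> \<le> m"
        hence "1 / d \<le> real m" by linarith
        hence "1 \<le> real m * d" using d by (simp add: field_simps)
        thus "s m x = 1" unfolding s_def mx d_def[symmetric] by simp
      qed
      hence "(\<lambda>m. s m x) \<longlonglongrightarrow> 1" by (rule tendsto_eventually)
      thus ?thesis using True by simp
    next
      case False
      have "exp (- a) \<le> exp (- max x 0)" using False a by simp
      hence "s m x = 0" for m unfolding s_def
        by (simp add: mult_nonneg_nonpos)
      thus ?thesis using False by simp
    qed
    have sb: "\<bar>s m x\<bar> \<le> 1" for m x by (simp add: s_def)
    have L: "(\<lambda>m. \<integral>x. s m x \<partial>Q) \<longlonglongrightarrow> (\<integral>x. indicator {a<..} x \<partial>Q)"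
    proof (rule integral_dominated_convergence[where w = "\<lambda>_. 1"])
      show "indicator {a<..} \<in> borel_measurable Q" using sQ by (simp add: borel_measurable_indicator_iff spQ)
      show "s m \<in> borel_measurable Q" for m using mQ by simp
      show "integrable Q (\<lambda>_. 1::real)" by simp
      show "AE x in Q. (\<lambda>m. s m x) \<longlonglongrightarrow> indicator {a<..} x" using lim by simp
      show "AE x in Q. norm (s m x) \<le> 1" for m using sb by simp
    qed
    have R: "(\<lambda>m. \<integral>x. s m x * G x \<partial>lborel) \<longlonglongrightarrow> (\<integral>x. indicator {a<..} x * G x \<partial>lborel)"
    proof (rule integral_dominated_convergence[where w = "\<lambda>x. \<bar>G x\<bar>"])
      show "integrable lborel (\<lambda>x. \<bar>G x\<bar>)" using Gi by simp
      show "AE x in lborel. (\<lambda>m. s m x * G x) \<longlonglongrightarrow> indicator {a<..} x * G x"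
        by (rule AE_I2) (intro tendsto_mult lim tendsto_const)
      show "AE x in lborel. norm (s m x * G x) \<le> \<bar>G x\<bar>" for m
        using sb by (auto simp: abs_mult intro!: mult_left_le_one_le)
    qed measurable
    have "(\<integral>x. indicator {a<..} x \<partial>Q) = (\<integral>x. indicator {a<..} x * G x \<partial>lborel)"
      using LIMSEQ_unique[OF L] R eq by simp
    thus ?thesis using spQ by simp
  qed
  have int_all: "measure Q {a<..} = (\<integral>x. indicator {a<..} x * G x \<partial>lborel)" for a
  proof (cases "a \<ge> 0")
    case True thus ?thesis by (rule int_pos)
  next
    case False
    have "measure Q {a<..} = measure Q UNIV - measure Q {..a}"
      using finite_measure_compl[of "{..a}"] sQ spQ by (simp add: Compl_eq_Diff_UNIV[symmetric] not_le)
    also have "\<dots> = measure Q UNIV" using Qle0[of a] False by simp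
    also have "\<dots> = (\<integral>x. indicator {a<..} x * G x \<partial>lborel)"
      unfolding tot by (rule Bochner_Integration.integral_cong[OF refl]) (use G0 False in \<open>auto simp: indicator_def\<close>)
    finally show ?thesis .
  qed
  have gen: "sets borel = sigma_sets UNIV (range greaterThan :: real set set)"
    by (subst borel_Ioi) (simp add: sets_measure_of)
  have all: "measure Q A = (\<integral>x. indicator A x * G x \<partial>lborel)" if A: "A \<in> sets borel" for A
  proof -
    have A': "A \<in> sigma_sets UNIV (range greaterThan)" using A gen by simp
    have ist: "Int_stable (range greaterThan :: real set set)"
      proof (unfold Int_stable_def, clarify)
        fix a b :: real
        have "{a<..} \<inter> {b<..} = {max a b<..}" by auto
        thus "{a<..} \<inter> {b<..} \<in> range greaterThan" by simp
      qed
    have cl: "range greaterThan \<subseteq> Pow (UNIV :: real set)" by simp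
    from ist cl A' show ?thesis
    proof (induction rule: sigma_sets_induct_disjoint)
      case (basic A) thus ?case using int_all by auto
    next
      case empty thus ?case by simp
    next
      case (compl A)
      have Ab: "A \<in> sets borel" using compl(1) gen by simp
      have "measure Q (UNIV - A) = measure Q UNIV - measure Q A"
        using finite_measure_compl[of A] sQ spQ Ab by simp
      also have "\<dots> = (\<integral>x. G x - indicator A x * G x \<partial>lborel)"
        unfolding tot compl(2) using intA[OF Ab] Gi by simp
      also have "\<dots> = (\<integral>x. indicator (UNIV - A) x * G x \<partial>lborel)"
        by (rule Bochner_Integration.integral_cong[OF refl]) (auto simp: indicator_def)
      finally show ?case .
    next
      case (union A)
      have Ab: "A i \<in> sets borel" for i using union(2) gen by auto
      have s1: "(\<lambda>i. measure Q (A i)) sums measure Q (\<Union>i. A i)"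
        by (rule finite_measure_UNION) (use Ab sQ union(1) in auto)
      have dj: "A i \<inter> A j = {}" if "i \<noteq> j" for i j
        using union(1) that by (auto simp: disjoint_family_on_def)
      have Ub: "(\<Union>i. A i) \<in> sets borel" using Ab by auto
      have si: "set_integrable lborel (\<Union>i. A i) G"
        unfolding set_integrable_def using intA[OF Ub] by simp
      have "(LINT x:(\<Union>i. A i)|lborel. G x) = (\<Sum>i. (LINT x:(A i)|lborel. G x))"
        by (rule lebesgue_integral_countable_add[OF _ dj si]) (use Ab in auto)
      hence "(\<integral>x. indicator (\<Union>i. A i) x * G x \<partial>lborel) = (\<Sum>i. \<integral>x. indicator (A i) x * G x \<partial>lborel)"
        by (simp add: set_lebesgue_integral_def)
      also have "\<dots> = (\<Sum>i. measure Q (A i))" using union(3) by simp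
      also have "\<dots> = measure Q (\<Union>i. A i)" using s1 by (simp add: sums_iff)
      finally show ?case by simp
    qed
  qed
  have Gnn: "AE x in lborel. 0 \<le> G x"
  proof -
    define N where "N = {x. G x < 0}"
    have Nb: "N \<in> sets borel" unfolding N_def by measurable
    have "(\<integral>x. indicator N x * G x \<partial>lborel) \<ge> 0" using all[OF Nb] measure_nonneg[of Q N] by linarith
    moreover have "0 \<le> (\<integral>x. - (indicator N x * G x) \<partial>lborel)"
      by (rule Bochner_Integration.integral_nonneg) (auto simp: N_def indicator_def)
    ultimately have "(\<integral>x. - (indicator N x * G x) \<partial>lborel) = 0" by simp
    moreover have "integrable lborel (\<lambda>x. - (indicator N x * G x))" using intA[OF Nb] by simp
    ultimately have "AE x in lborel. - (indicator N x * G x) = 0"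
      using integral_nonneg_eq_0_iff_AE[of lborel "\<lambda>x. - (indicator N x * G x)"]
      by (auto simp: N_def indicator_def mult_nonneg_nonpos)
    thus ?thesis by eventually_elim (auto simp: N_def indicator_def split: if_splits)
  qed
  show ?thesis
  proof (rule measure_eqI)
    show "sets Q = sets (density lborel (\<lambda>x. ennreal (G x)))" using sQ by simp
  next
    fix A assume "A \<in> sets Q"
    hence Ab: "A \<in> sets borel" using sQ by simp
    have "emeasure Q A = ennreal (measure Q A)" using emeasure_eq_measure by simp
    also have "\<dots> = ennreal (\<integral>x. indicator A x * G x \<partial>lborel)" using all[OF Ab] by simp
    also have "\<dots> = (\<integral>\<^sup>+x. ennreal (indicator A x * G x) \<partial>lborel)"
      by (rule nn_integral_eq_integral[symmetric]) (use intA[OF Ab] Gnn in \<open>auto simp: indicator_def\<close>)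
    also have "\<dots> = (\<integral>\<^sup>+x. ennreal (G x) * indicator A x \<partial>lborel)"
      by (rule nn_integral_cong) (auto simp: indicator_def)
    also have "\<dots> = emeasure (density lborel (\<lambda>x. ennreal (G x))) A"
      using Ab by (simp add: emeasure_density)
    finally show "emeasure Q A = emeasure (density lborel (\<lambda>x. ennreal (G x))) A" .
  qed
qed



lemma lim_zero:
  fixes lam t :: real assumes l: "lam > 0" and t: "t > 0"
  shows "(\<lambda>n. (lam / (lam + real n)) powr t) \<longlonglongrightarrow> 0"
proof (rule tendsto_zero_powrI)
  have "LIM n sequentially. lam + real n :> at_top"
    by (rule filterlim_tendsto_add_at_top[OF tendsto_const filterlim_real_sequentially])
  hence "LIM n sequentially. lam + real n :> at_infinity" by (rule filterlim_at_top_imp_at_infinity)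
  thus "(\<lambda>n. lam / (lam + real n)) \<longlonglongrightarrow> 0" by (rule tendsto_divide_0[OF tendsto_const])
  show "(\<lambda>n. t) \<longlonglongrightarrow> t" by simp
  show "\<forall>\<^sub>F n in sequentially. 0 \<le> lam / (lam + real n)" using l by simp
qed (rule t)

theorem mainTheorem2:
  fixes M :: "'a measure" and X :: "real \<Rightarrow> 'a \<Rightarrow> real"
    and \<alpha> lam :: real
  assumes "0 < \<alpha>" and "\<alpha> \<le> 1" and "0 < lam"
    and "levy_process M X"
    and "\<And>t u. t \<ge> 0 \<Longrightarrow> u \<ge> 0 \<Longrightarrow>
           integrable M (\<lambda>\<omega>. exp (- u * X t \<omega>)) \<and>
           (\<integral>\<omega>. exp (- u * X t \<omega>) \<partial>M) = (lam / (lam + u powr \<alpha>)) powr t"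
    and "t > 0"
  shows "distributed M lborel (X t)
           (\<lambda>x. ennreal (if x > 0 then
              (\<Sum>k. (-1) ^ k * (lam powr (t + real k) * Gamma (t + real k))
                      / (Gamma t * Gamma (real k + 1))
                    * x powr (\<alpha> * (t + real k) - 1) / Gamma (\<alpha> * (t + real k)))
            else 0))"
proof -
  note a = assms(1) and l = assms(3) and t = assms(6)
  have lev: "prob_space M" "X t \<in> borel_measurable M"
    using assms(4) t unfolding levy_process_def by auto
  interpret prob_space M by (rule lev(1))
  have Xm[measurable]: "X t \<in> measurable M lborel"
    using lev(2) by (subst measurable_cong_sets[OF refl sets_lborel])
  define P where "P = distr M lborel (X t)"
  have sP: "sets P = sets borel" by (simp add: P_def)
  have spP: "space P = UNIV" by (simp add: P_def)
  interpret P: prob_space P unfolding P_def by (rule prob_space_distr) (rule Xm)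
  have Pm: "f \<in> borel_measurable P \<longleftrightarrow> f \<in> borel_measurable borel" for f :: "real \<Rightarrow> real"
    by (subst measurable_cong_sets[OF sP refl]) (rule refl)
  have Lap: "integrable P (\<lambda>x. exp (- u * x)) \<and> (\<integral>x. exp (- u * x) \<partial>P) = (lam / (lam + u powr \<alpha>)) powr t"
    if u: "u \<ge> 0" for u
  proof -
    have m: "(\<lambda>x. exp (- u * x)) \<in> borel_measurable lborel" by measurable
    show ?thesis using assms(5)[of t u] t u
      unfolding P_def integrable_distr_eq[OF Xm m] integral_distr[OF Xm m] by simp
  qed
  have P0: "emeasure P {..0} = 0"
  proof -
    have b: "measure P {..0} \<le> (lam / (lam + real n)) powr t" for n :: nat
    proof -
      define u where "u = real n powr (1 / \<alpha>)"
      have u0: "u \<ge> 0" by (simp add: u_def)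
      have ua: "u powr \<alpha> = real n" using a by (simp add: u_def powr_powr)
      have "measure P {..0} = (\<integral>x. indicator {..0} x \<partial>P)" using spP by simp
      also have "\<dots> \<le> (\<integral>x. exp (- u * x) \<partial>P)"
      proof (rule integral_mono)
        show "integrable P (indicator {..0} :: real \<Rightarrow> real)"
          using sP by (intro P.integrable_const_bound[where B=1]) (auto simp: Pm)
        show "integrable P (\<lambda>x. exp (- u * x))" using Lap[OF u0] by simp
        show "indicator {..0} x \<le> exp (- u * x)" for x :: real
          using u0 by (auto simp: indicator_def mult_nonneg_nonpos)
      qed
      also have "\<dots> = (lam / (lam + real n)) powr t" using Lap[OF u0] ua by simp
      finally show ?thesis .
    qed
    have "measure P {..0} \<le> 0"
      by (rule tendsto_lowerbound[OF lim_zero[OF l t]]) (use b in \<open>auto intro: always_eventually\<close>)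
    hence "measure P {..0} = 0" by (simp add: antisym)
    thus ?thesis by (simp add: P.emeasure_eq_measure)
  qed
  have AEpos: "AE x in P. x > 0"
  proof (rule AE_I')
    show "{..0} \<in> null_sets P" using P0 sP by (auto simp: null_sets_def)
  qed (auto simp: spP)
  define c where "c = (2 * lam) powr (1 / \<alpha>)"
  have c0: "c > 0" using l by (simp add: c_def)
  have ca: "c powr \<alpha> = 2 * lam" using a l by (simp add: c_def powr_powr)
  have cn: "lam < (c + real n) powr \<alpha>" for n :: nat
  proof -
    have "c powr \<alpha> \<le> (c + real n) powr \<alpha>" by (rule powr_mono2) (use a c0 in auto)
    thus ?thesis using ca l by simp
  qed
  define Q where "Q = density P (\<lambda>x. ennreal (exp (- c * x)))"
  have sQ: "sets Q = sets borel" by (simp add: Q_def sP)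
  have Lc: "integrable P (\<lambda>x. exp (- c * x))" using Lap c0 by simp
  have finQ: "finite_measure Q"
  proof (rule finite_measureI)
    have "emeasure Q (space Q) = (\<integral>\<^sup>+x. ennreal (exp (- c * x)) \<partial>P)"
      unfolding Q_def using emeasure_density[of "\<lambda>x. ennreal (exp (- c * x))" P "space P"]
      by (simp add: Pm)
    also have "\<dots> = ennreal (\<integral>x. exp (- c * x) \<partial>P)"
      by (rule nn_integral_eq_integral[OF Lc]) simp
    finally show "emeasure Q (space Q) \<noteq> \<infinity>" by simp
  qed
  have Q0: "emeasure Q {..0} = 0"
  proof -
    have "emeasure Q {..0} = (\<integral>\<^sup>+x. ennreal (exp (- c * x)) * indicator {..0} x \<partial>P)"
      unfolding Q_def by (rule emeasure_density) (use sP in \<open>auto simp: Pm\<close>)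
    also have "\<dots> = (\<integral>\<^sup>+x. 0 \<partial>P)"
      by (rule nn_integral_cong_AE) (use AEpos in \<open>auto elim!: AE_mp\<close>)
    finally show ?thesis by simp
  qed
  define G where "G x = exp (- c * x) * gd \<alpha> lam t x" for x
  have Gi: "integrable lborel G" unfolding G_def[abs_def] using laplace_gd(1)[OF a l t c0] cn[of 0] by simp
  have Gm[measurable]: "G \<in> borel_measurable borel" unfolding G_def[abs_def] by measurable
  have G0: "G x = 0" if "x \<le> 0" for x using that by (simp add: G_def gd_def)
  have mom: "(\<integral>x. exp (- max x 0) ^ n \<partial>Q) = (\<integral>x. exp (- max x 0) ^ n * G x \<partial>lborel)" for n :: nat
  proof -
    have cpos: "c + real n > 0" using c0 by simp
    have e: "exp (- max x 0) ^ n = exp (- real n * x)" if "x > 0" for x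
      using that exp_of_nat_mult[of n "- x"] by simp
    have "(\<integral>x. exp (- max x 0) ^ n \<partial>Q) = (\<integral>x. exp (- c * x) * exp (- max x 0) ^ n \<partial>P)"
      unfolding Q_def by (subst integral_density) (auto simp: Pm)
    also have "\<dots> = (\<integral>x. exp (- (c + real n) * x) \<partial>P)"
      by (rule integral_cong_AE) (use AEpos e in \<open>auto simp: Pm elim!: AE_mp simp: exp_add[symmetric] algebra_simps\<close>)
    also have "\<dots> = (lam / (lam + (c + real n) powr \<alpha>)) powr t" using Lap[of "c + real n"] cpos by simp
    also have "\<dots> = (\<integral>x. exp (- (c + real n) * x) * gd \<alpha> lam t x \<partial>lborel)"
      using laplace_gd(2)[OF a l t cpos cn[of n]] by simp
    also have "\<dots> = (\<integral>x. exp (- max x 0) ^ n * G x \<partial>lborel)"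
    proof (rule Bochner_Integration.integral_cong[OF refl])
      fix x show "exp (- (c + real n) * x) * gd \<alpha> lam t x = exp (- max x 0) ^ n * G x"
      proof (cases "x > 0")
        case True thus ?thesis using e[OF True] by (simp add: G_def exp_add[symmetric] algebra_simps)
      next
        case False thus ?thesis by (simp add: G_def gd_def)
      qed
    qed
    finally show ?thesis .
  qed
  have QG: "Q = density lborel (\<lambda>x. ennreal (G x))" by (rule U_main[OF finQ sQ Q0 Gi G0 mom])
  have "P = density Q (\<lambda>x. ennreal (exp (c * x)))"
  proof -
    have "density Q (\<lambda>x. ennreal (exp (c * x))) = density P (\<lambda>x. ennreal (exp (- c * x)) * ennreal (exp (c * x)))"
      unfolding Q_def by (rule density_density_eq) (auto simp: Pm)
    also have "(\<lambda>x. ennreal (exp (- c * x)) * ennreal (exp (c * x))) = (\<lambda>_. 1)"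
      by (auto simp: ennreal_mult''[symmetric] exp_add[symmetric])
    finally show ?thesis by (simp add: density_1)
  qed
  also have "\<dots> = density lborel (\<lambda>x. ennreal (G x) * ennreal (exp (c * x)))"
    unfolding QG by (rule density_density_eq) measurable
  also have "(\<lambda>x. ennreal (G x) * ennreal (exp (c * x))) = (\<lambda>x. ennreal (gd \<alpha> lam t x))"
  proof
    fix x
    have e: "G x * exp (c * x) = gd \<alpha> lam t x" unfolding G_def by (simp add: exp_minus field_simps)
    have "ennreal (G x) * ennreal (exp (c * x)) = ennreal (G x * exp (c * x))" by (simp add: ennreal_mult'')
    thus "ennreal (G x) * ennreal (exp (c * x)) = ennreal (gd \<alpha> lam t x)" using e by simp
  qed
  finally have PD: "P = density lborel (\<lambda>x. ennreal (gd \<alpha> lam t x))" .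
  have fe: "(\<lambda>x. ennreal (if x > 0 then
              (\<Sum>k. (-1) ^ k * (lam powr (t + real k) * Gamma (t + real k))
                      / (Gamma t * Gamma (real k + 1))
                    * x powr (\<alpha> * (t + real k) - 1) / Gamma (\<alpha> * (t + real k)))
            else 0)) = (\<lambda>x. ennreal (gd \<alpha> lam t x))"
    unfolding gd_def cf_def by (rule refl)
  show ?thesis unfolding fe distributed_def using PD Xm by (simp add: P_def)
qed

end
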